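(* Let $g,h:[0,1]\to\mathbb{R}$ be square integrable, piecewise continuous and strictly monotonic functions, let $U_0\sim\mathcal{U}(0,1)$ and let $F_g,F_h$ be the distribution functions of $g(U_0),h(U_0)$. Then: (i) $F_g$ and $F_h$ are continuous and $T_g=F_g\circ g$ and $T_h=F_h\circ h$ are uniform-distribution-preserving transformations; (ii) if $g$ and $h$ are continuous, $F_g$ and $F_h$ are strictly increasing on the range of $g$ and $h$ respectively; (iii) if $X,Y$ are continuous random variables and $U=F_X(X)$, $V=F_Y(Y)$, then $$\rho_{\{g,h\}}(X,Y)=\rho(g(U),h(V))=\rho\big(F_g^{-1}(T_g(U)),F_h^{-1}(T_h(V))\big).$$
   Context: $\psi$ is piecewise continuous and strictly monotonic if there is a finite partition $0=u_0<\dots<u_M=1$ such that $\psi$ restricted to each $(u_{m-1},u_m)$ is continuous and strictly monotonic (partitions of $g$ and $h$ may differ). A map $T:[0,1]\to[0,1]$ is uniform-distribution-preserving if $T(U)\sim\mathcal{U}(0,1)$ for $U\sim\mathcal{U}(0,1)$. $\rho_{\{g,h\}}(X,Y)=\rho(g(F_X(X)),h(F_Y(Y)))$ with $\rho$ Pearson correlation; $F^{-1}(u)=\inf\{x:F(x)\ge u\}$. *)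

theory Defs
  imports "HOL-Probability.Probability"
begin

definition U01 :: "real measure" where
  "U01 = restrict_space lborel {0..1}"

definition pw_cont_strict_mono :: "(real \<Rightarrow> real) \<Rightarrow> bool" where
  "pw_cont_strict_mono g \<longleftrightarrow>
     (\<exists>(M::nat) (u::nat \<Rightarrow> real). u 0 = 0 \<and> u M = 1 \<and> (\<forall>m<M. u m < u (Suc m)) \<and>
        (\<forall>m<M. continuous_on {u m<..<u (Suc m)} g \<and>
               (monotone_on {u m<..<u (Suc m)} (<) (<) g \<or>
                monotone_on {u m<..<u (Suc m)} (<) (>) g)))"

definition square_integrable01 :: "(real \<Rightarrow> real) \<Rightarrow> bool" where
  "square_integrable01 g \<longleftrightarrow> g \<in> borel_measurable U01 \<and> integrable U01 (\<lambda>u. (g u)^2)"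

definition unif_preserving :: "(real \<Rightarrow> real) \<Rightarrow> bool" where
  "unif_preserving T \<longleftrightarrow> T \<in> borel_measurable U01 \<and> distr U01 borel T = distr U01 borel (\<lambda>u. u)"

definition gen_inv :: "(real \<Rightarrow> real) \<Rightarrow> real \<Rightarrow> real" where
  "gen_inv F u = Inf {x. F x \<ge> u}"

definition pearson :: "'a measure \<Rightarrow> ('a \<Rightarrow> real) \<Rightarrow> ('a \<Rightarrow> real) \<Rightarrow> real" where
  "pearson M X Y =
     (\<integral>\<omega>. (X \<omega> - (\<integral>\<omega>. X \<omega> \<partial>M)) * (Y \<omega> - (\<integral>\<omega>. Y \<omega> \<partial>M)) \<partial>M) /
     sqrt ((\<integral>\<omega>. (X \<omega> - (\<integral>\<omega>. X \<omega> \<partial>M))^2 \<partial>M) * (\<integral>\<omega>. (Y \<omega> - (\<integral>\<omega>. Y \<omega> \<partial>M))^2 \<partial>M))"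

definition rho_gh :: "'a measure \<Rightarrow> (real \<Rightarrow> real) \<Rightarrow> (real \<Rightarrow> real) \<Rightarrow> ('a \<Rightarrow> real) \<Rightarrow> ('a \<Rightarrow> real) \<Rightarrow> real" where
  "rho_gh M g h X Y =
     pearson M (\<lambda>\<omega>. g (cdf (distr M borel X) (X \<omega>))) (\<lambda>\<omega>. h (cdf (distr M borel Y) (Y \<omega>)))"

end

theory Submission
  imports Defs
begin


lemma U01_space: "space U01 = {0..1}"
  by (simp add: U01_def space_restrict_space)

lemma U01_sets: "A \<in> sets U01 \<longleftrightarrow> A \<subseteq> {0..1} \<and> A \<in> sets borel"
  unfolding U01_def by (subst sets_restrict_space_iff) auto

lemma U01_emeasure: "A \<in> sets borel \<Longrightarrow> A \<subseteq> {0..1} \<Longrightarrow> emeasure U01 A = emeasure lborel A"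
  unfolding U01_def by (rule emeasure_restrict_space) auto

lemma U01_prob: "prob_space U01"
  unfolding U01_def by (rule prob_space_restrict_space) auto

lemma U01_measure: "A \<in> sets borel \<Longrightarrow> A \<subseteq> {0..1} \<Longrightarrow> measure U01 A = measure lborel A"
  unfolding measure_def by (simp add: U01_emeasure)

lemma cdf_distr_eq:
  assumes "X \<in> borel_measurable M"
  shows "cdf (distr M borel X) x = measure M {\<omega>\<in>space M. X \<omega> \<le> x}"
  unfolding cdf_def using assms by (subst measure_distr) (auto simp: vimage_def Int_def conj_commute)

lemma cdf_mono_distr:
  assumes "prob_space M" "X \<in> borel_measurable M"
  shows "mono (cdf (distr M borel X))"
proof -
  interpret R: real_distribution "distr M borel X" using prob_space.real_distribution_distr[OF assms] .
  show ?thesis by (intro monoI R.cdf_nondecreasing)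
qed

lemma pit_core:
  assumes P: "prob_space M" and X[measurable]: "X \<in> borel_measurable M"
    and cont: "continuous_on UNIV (cdf (distr M borel X))"
    and c: "0 \<le> c" "c < 1"
  shows "measure M {\<omega>\<in>space M. cdf (distr M borel X) (X \<omega>) \<le> c} = c"
proof -
  define F where "F = cdf (distr M borel X)"
  interpret R: real_distribution "distr M borel X" using prob_space.real_distribution_distr[OF P X] .
  have Fmono: "x \<le> y \<Longrightarrow> F x \<le> F y" for x y unfolding F_def by (rule R.cdf_nondecreasing)
  have Fcont: "continuous_on UNIV F" using cont F_def by simp
  define S where "S = {x. F x \<le> c}"
  have setS: "{\<omega>\<in>space M. F (X \<omega>) \<le> c} = X -` S \<inter> space M" unfolding S_def by auto
  show ?thesis
  proof (cases "S = {}")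
    case True
    have "c = 0"
    proof (rule ccontr)
      assume "c \<noteq> 0" then have "c > 0" using c by simp
      have "eventually (\<lambda>x. F x < c) at_bot"
        using R.cdf_lim_at_bot \<open>c > 0\<close> unfolding F_def by (simp add: order_tendstoD(2))
      then obtain x where "F x < c" using eventually_happens[of _ at_bot] by (metis eventually_at_bot_linorder order.refl)
      then show False using True S_def less_imp_le by blast
    qed
    moreover have "{\<omega>\<in>space M. F (X \<omega>) \<le> c} = {}" using setS True by auto
    ultimately show ?thesis unfolding F_def by (metis measure_empty)
  next
    case False
    have "eventually (\<lambda>x. F x > c) at_top"
      using R.cdf_lim_at_top_prob \<open>c < 1\<close> unfolding F_def by (simp add: order_tendstoD(1))
    then obtain x1 where x1: "F x1 > c" by (metis eventually_at_top_linorder order.refl)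
    have bdd: "bdd_above S"
      unfolding bdd_above_def S_def
      by (rule exI[of _ x1]) (smt (verit) Fmono x1 mem_Collect_eq)
    have clS: "closed S" unfolding S_def
      by (rule closed_Collect_le[OF Fcont]) simp
    define m where "m = Sup S"
    have mS: "m \<in> S" unfolding m_def using closed_contains_Sup[OF False bdd clS] .
    have "m \<le> x1" using mS x1 Fmono S_def by (smt (verit) mem_Collect_eq)
    have "F m \<le> c" using mS S_def by simp
    obtain z where z: "m \<le> z" "z \<le> x1" "F z = c"
      using IVT'[of F m c x1] \<open>F m \<le> c\<close> x1 \<open>m \<le> x1\<close> continuous_on_subset[OF Fcont] by force
    have "z \<le> m" unfolding m_def by (rule cSup_upper) (use z S_def bdd in auto)
    then have Fm: "F m = c" using z by simp
    have "X -` S \<inter> space M = {\<omega>\<in>space M. X \<omega> \<le> m}"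
      using Fmono Fm cSup_upper[OF _ bdd] m_def S_def by fastforce
    then show ?thesis using setS Fm cdf_distr_eq[OF X] unfolding F_def by simp
  qed
qed

lemma cdf_U01: "cdf (distr U01 borel (\<lambda>u. u)) t = max 0 (min 1 t)"
proof -
  have m: "(\<lambda>u. u) \<in> borel_measurable U01" unfolding U01_def by (rule measurable_restrict_space1) simp
  have e: "cdf (distr U01 borel (\<lambda>u. u)) t = measure U01 {u\<in>{0..1}. u \<le> t}"
    using cdf_distr_eq[OF m] U01_space by simp
  consider "t < 0" | "t \<ge> 1" | "0 \<le> t" "t < 1" by linarith
  then show ?thesis
  proof cases
    case 1 then have "{u\<in>{0..1}. u \<le> t} = {}" by auto
    then show ?thesis using e 1 by (metis max_def measure_empty min_def not_le order.strict_trans zero_less_one)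
  next
    case 2 then have "{u\<in>{0..1}. u \<le> t} = {0..1}" by auto
    then show ?thesis using e 2 U01_measure[of "{0..1}"] by simp
  next
    case 3 then have "{u\<in>{0..1::real}. u \<le> t} = {0..t}" by auto
    then show ?thesis using e 3 U01_measure[of "{0..t}"] by simp
  qed
qed

lemma pit_cdf:
  assumes P: "prob_space M" and X[measurable]: "X \<in> borel_measurable M"
    and cont: "continuous_on UNIV (cdf (distr M borel X))"
  shows "measure M {\<omega>\<in>space M. cdf (distr M borel X) (X \<omega>) \<le> t} = max 0 (min 1 t)"
proof -
  define F where "F = cdf (distr M borel X)"
  interpret R: real_distribution "distr M borel X" using prob_space.real_distribution_distr[OF P X] .
  interpret P: prob_space M by (rule P)
  have b: "F x \<ge> 0" "F x \<le> 1" for x unfolding F_def using R.cdf_nonneg R.cdf_bounded_prob by auto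
  consider "t < 0" | "t \<ge> 1" | "0 \<le> t" "t < 1" by linarith
  then show ?thesis
  proof cases
    case 1 then have "{\<omega>\<in>space M. F (X \<omega>) \<le> t} = {}" using b by (smt (verit) Collect_empty_eq)
    then show ?thesis using 1 unfolding F_def by (metis measure_empty max_def min_def not_le order.strict_trans zero_less_one)
  next
    case 2 then have "{\<omega>\<in>space M. F (X \<omega>) \<le> t} = space M" using b by (smt (verit) Collect_cong Collect_mem_eq)
    then show ?thesis using 2 P.prob_space unfolding F_def by simp
  next
    case 3 then show ?thesis using pit_core[OF P X cont, of t] by simp
  qed
qed

lemma pit_distr:
  assumes P: "prob_space M" and X[measurable]: "X \<in> borel_measurable M"
    and cont: "continuous_on UNIV (cdf (distr M borel X))"
  shows "distr M borel (\<lambda>\<omega>. cdf (distr M borel X) (X \<omega>)) = distr U01 borel (\<lambda>u. u)"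
    and "distr M U01 (\<lambda>\<omega>. cdf (distr M borel X) (X \<omega>)) = U01"
proof -
  define F where "F = cdf (distr M borel X)"
  interpret R: real_distribution "distr M borel X" using prob_space.real_distribution_distr[OF P X] .
  interpret P: prob_space M by (rule P)
  have Fm[measurable]: "F \<in> borel_measurable borel"
    using cont unfolding F_def by (intro borel_measurable_continuous_onI) 
  have Wm[measurable]: "(\<lambda>\<omega>. F (X \<omega>)) \<in> borel_measurable M" by measurable
  have b: "F x \<ge> 0" "F x \<le> 1" for x unfolding F_def using R.cdf_nonneg R.cdf_bounded_prob by auto
  have m: "(\<lambda>u. u) \<in> borel_measurable U01" unfolding U01_def by (rule measurable_restrict_space1) simp
  have D1: "distr M borel (\<lambda>\<omega>. F (X \<omega>)) = distr U01 borel (\<lambda>u. u)"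
  proof (rule cdf_unique)
    show "real_distribution (distr M borel (\<lambda>\<omega>. F (X \<omega>)))" using Wm by simp
    show "real_distribution (distr U01 borel (\<lambda>u. u))" 
      using prob_space.real_distribution_distr[OF U01_prob m] .
    show "cdf (distr M borel (\<lambda>\<omega>. F (X \<omega>))) = cdf (distr U01 borel (\<lambda>u. u))"
      using cdf_U01 cdf_distr_eq[OF Wm] pit_cdf[OF P X cont] unfolding F_def by auto
  qed
  then show "distr M borel (\<lambda>\<omega>. cdf (distr M borel X) (X \<omega>)) = distr U01 borel (\<lambda>u. u)"
    unfolding F_def .
  have WU[measurable]: "(\<lambda>\<omega>. F (X \<omega>)) \<in> measurable M U01"
    unfolding U01_def by (rule measurable_restrict_space2) (use b in auto)
  have "distr M U01 (\<lambda>\<omega>. F (X \<omega>)) = U01"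
  proof (rule measure_eqI)
    show "sets (distr M U01 (\<lambda>\<omega>. F (X \<omega>))) = sets U01" by simp
    fix A assume A: "A \<in> sets (distr M U01 (\<lambda>\<omega>. F (X \<omega>)))"
    then have A': "A \<subseteq> {0..1}" "A \<in> sets borel" using U01_sets by auto
    have "emeasure (distr M U01 (\<lambda>\<omega>. F (X \<omega>))) A = emeasure (distr M borel (\<lambda>\<omega>. F (X \<omega>))) A"
      using A A' by (simp add: emeasure_distr)
    also have "\<dots> = emeasure (distr U01 borel (\<lambda>u. u)) A" using D1 by simp
    also have "\<dots> = emeasure U01 A" using A' m
      by (simp add: emeasure_distr U01_space Int_absorb2)
    finally show "emeasure (distr M U01 (\<lambda>\<omega>. F (X \<omega>))) A = emeasure U01 A" .
  qed
  then show "distr M U01 (\<lambda>\<omega>. cdf (distr M borel X) (X \<omega>)) = U01" unfolding F_def .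
qed

lemma cover_partition:
  fixes u :: "nat \<Rightarrow> real"
  assumes "\<forall>m<M. u m < u (Suc m)"
  shows "k \<le> M \<Longrightarrow> u 0 \<le> x \<Longrightarrow> x \<le> u k \<Longrightarrow>
     x \<in> u ` {..k} \<or> (\<exists>m<k. x \<in> {u m<..<u (Suc m)})"
proof (induction k)
  case 0 then show ?case by auto
next
  case (Suc k)
  show ?case
  proof (cases "x \<le> u k")
    case True then show ?thesis using Suc by force
  next
    case False
    then show ?thesis using Suc.prems
      by (cases "x = u (Suc k)") (auto simp: image_iff intro!: exI[of _ k])
  qed
qed

lemma level_finite:
  assumes "pw_cont_strict_mono g"
  shows "finite {x\<in>{0..1}. g x = y}"
proof -
  obtain M and u :: "nat \<Rightarrow> real" where u: "u 0 = 0" "u M = 1" "\<forall>m<M. u m < u (Suc m)"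
    and pc: "\<forall>m<M. continuous_on {u m<..<u (Suc m)} g \<and>
               (monotone_on {u m<..<u (Suc m)} (<) (<) g \<or>
                monotone_on {u m<..<u (Suc m)} (<) (>) g)"
    using assms unfolding pw_cont_strict_mono_def by blast
  have inj: "inj_on g {u m<..<u (Suc m)}" if "m < M" for m
  proof -
    have *: "monotone_on {u m<..<u (Suc m)} (<) (<) g \<or> monotone_on {u m<..<u (Suc m)} (<) (>) g"
      using pc that by blast
    show ?thesis unfolding inj_on_def
    proof (intro ballI impI)
      fix a b assume ab: "a \<in> {u m<..<u (Suc m)}" "b \<in> {u m<..<u (Suc m)}" "g a = g b"
      show "a = b"
      proof (rule ccontr)
        assume "a \<noteq> b"
        then consider "a < b" | "b < a" by linarith
        then show False using * ab unfolding monotone_on_def by cases force+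
      qed
    qed
  qed
  have fin: "finite {x\<in>{u m<..<u (Suc m)}. g x = y}" if "m < M" for m
  proof -
    have "{x\<in>{u m<..<u (Suc m)}. g x = y} \<subseteq> inv_into {u m<..<u (Suc m)} g ` {y}"
      using inv_into_f_f[OF inj[OF that]] by auto
    then show ?thesis by (rule finite_subset) simp
  qed
  have "{x\<in>{0..1}. g x = y} \<subseteq> u ` {..M} \<union> (\<Union>m<M. {x\<in>{u m<..<u (Suc m)}. g x = y})"
  proof
    fix x assume x: "x \<in> {x\<in>{0..1}. g x = y}"
    then have "x \<in> u ` {..M} \<or> (\<exists>m<M. x \<in> {u m<..<u (Suc m)})"
      using cover_partition[OF u(3), of M x] u by auto
    then show "x \<in> u ` {..M} \<union> (\<Union>m<M. {x\<in>{u m<..<u (Suc m)}. g x = y})" using x by blast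
  qed
  then show ?thesis by (rule finite_subset) (use fin in auto)
qed

lemma Fg_cont:
  assumes "pw_cont_strict_mono g" and gm: "g \<in> borel_measurable U01"
  shows "continuous_on UNIV (cdf (distr U01 borel g))"
proof -
  interpret R: real_distribution "distr U01 borel g" using prob_space.real_distribution_distr[OF U01_prob gm] .
  have "isCont (cdf (distr U01 borel g)) y" for y
  proof -
    have fin: "finite {x\<in>{0..1}. g x = y}" by (rule level_finite[OF assms(1)])
    have eq: "g -` {y} \<inter> space U01 = {x\<in>{0..1}. g x = y}" using U01_space by auto
    have "measure (distr U01 borel g) {y} = measure U01 (g -` {y} \<inter> space U01)"
      using gm by (simp add: measure_distr)
    also have "\<dots> = measure lborel {x\<in>{0..1}. g x = y}"
      unfolding eq using fin by (intro U01_measure) (auto intro: finite_imp_closed borel_closed)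
    also have "\<dots> = 0" using fin
      by (simp add: measure_def emeasure_lborel_countable countable_finite)
    finally show ?thesis by (simp add: R.isCont_cdf)
  qed
  then show ?thesis by (intro continuous_at_imp_continuous_on) auto
qed

lemma mid_point:
  fixes g :: "real \<Rightarrow> real"
  assumes cont: "continuous_on {0..1} g" and st: "s \<in> {0..1}" "t \<in> {0..1}" and ab: "g s < g t"
  shows "\<exists>c. 0 < c \<and> c < 1 \<and> g c = (g s + g t) / 2"
proof (cases "s \<le> t")
  case True
  have "continuous_on {s..t} g" using cont st by (auto intro: continuous_on_subset)
  then obtain c where c: "s \<le> c" "c \<le> t" "g c = (g s + g t) / 2"
    using IVT'[of g s "(g s + g t)/2" t] True ab by auto
  then have "c \<noteq> s" "c \<noteq> t" using ab by auto
  then show ?thesis using c st by (intro exI[of _ c]) auto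
next
  case False
  have "continuous_on {t..s} g" using cont st by (auto intro: continuous_on_subset)
  then obtain c where c: "t \<le> c" "c \<le> s" "g c = (g s + g t) / 2"
    using IVT2'[of g s "(g s + g t)/2" t] False ab by auto
  then have "c \<noteq> s" "c \<noteq> t" using ab by auto
  then show ?thesis using c st by (intro exI[of _ c]) auto
qed

lemma Fg_strict:
  assumes gm[measurable]: "g \<in> borel_measurable U01" and cont: "continuous_on {0..1} g"
  shows "strict_mono_on (g ` {0..1}) (cdf (distr U01 borel g))"
proof (rule strict_mono_onI)
  interpret P: prob_space U01 by (rule U01_prob)
  fix r s assume "r \<in> g ` {0..1}" "s \<in> g ` {0..1}" and rs: "r < s"
  then obtain x y where xy: "x \<in> {0..1}" "y \<in> {0..1}" "r = g x" "s = g y" by auto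
  obtain c where c: "0 < c" "c < 1" "g c = (r + s) / 2" using mid_point[OF cont xy(1,2)] xy rs by auto
  have "isCont g c" using cont c by (intro continuous_on_interior[of "{0..1}"]) auto
  then obtain d where d: "d > 0" "\<forall>x'. dist x' c < d \<longrightarrow> dist (g x') (g c) < (s - r) / 2"
    unfolding continuous_at_eps_delta using rs by (meson half_gt_zero_iff diff_gt_0_iff_gt)
  define e where "e = min (d/2) (min (c/2) ((1-c)/2))"
  have e: "e > 0" "e < d" "0 \<le> c - e" "c + e \<le> 1" using d(1) c(1,2) unfolding e_def by (auto simp: min_def field_simps)
  define A where "A = {x\<in>space U01. g x \<le> r}"
  define B where "B = {x\<in>space U01. g x \<le> s}"
  have AB[measurable]: "A \<in> sets U01" "B \<in> sets U01" unfolding A_def B_def by measurable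
  have "A \<subseteq> B" using rs unfolding A_def B_def by auto
  have I: "{c-e..c+e} \<subseteq> B - A"
  proof
    fix x assume x: "x \<in> {c-e..c+e}"
    then have "dist x c < d" using e by (auto simp: dist_real_def)
    then have "\<bar>g x - g c\<bar> < (s - r)/2" using d by (auto simp: dist_real_def)
    then have "r < g x" "g x < s" using c(3) by (auto simp: abs_less_iff field_simps)
    then show "x \<in> B - A" using x e unfolding A_def B_def U01_space by auto
  qed
  have "0 < measure lborel {c-e..c+e}" using e by simp
  also have "\<dots> = measure U01 {c-e..c+e}" using e by (intro U01_measure[symmetric]) auto
  also have "\<dots> \<le> measure U01 (B - A)" using I AB by (intro P.finite_measure_mono) auto
  also have "\<dots> = measure U01 B - measure U01 A" using AB \<open>A \<subseteq> B\<close> by (intro P.finite_measure_Diff)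
  finally show "cdf (distr U01 borel g) r < cdf (distr U01 borel g) s"
    unfolding A_def B_def cdf_distr_eq[OF gm] by simp
qed

lemma gen_inv_eq:
  assumes "mono F" "\<forall>z<y. F z \<noteq> F y"
  shows "gen_inv F (F y) = y"
  unfolding gen_inv_def
proof (rule cInf_eq_minimum)
  show "y \<in> {x. F y \<le> F x}" by simp
  fix x assume "x \<in> {x. F y \<le> F x}"
  then show "y \<le> x" using assms by (metis mem_Collect_eq monoD nle_le order_less_le)
qed

lemma gen_inv_meas:
  fixes F :: "real \<Rightarrow> real"
  assumes nn: "\<And>x. F x \<ge> 0" and le: "\<And>x. F x \<le> 1" and F0: "(F \<longlongrightarrow> 0) at_bot" and F1: "(F \<longlongrightarrow> 1) at_top"
  shows "gen_inv F \<in> borel_measurable borel"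
proof (rule measurable_piecewise_restrict[of "{{..0}, {0<..<1}, {1}, {1<..}}"])
  show "countable {{..0::real}, {0<..<1}, {1}, {1<..}}" by simp
  show "space borel \<subseteq> \<Union> {{..0::real}, {0<..<1}, {1}, {1<..}}" by auto
  fix \<Omega> :: "real set" assume \<Omega>: "\<Omega> \<in> {{..0}, {0<..<1}, {1}, {1<..}}"
  then show "\<Omega> \<inter> space borel \<in> sets borel" by auto
  have "mono_on \<Omega> (gen_inv F)"
  proof -
    { assume "\<Omega> = {..0}"
      then have "\<forall>v\<in>\<Omega>. gen_inv F v = Inf UNIV" unfolding gen_inv_def using nn
        by (metis (mono_tags, lifting) UNIV_eq_I atMost_iff mem_Collect_eq order_trans)
      then have ?thesis by (simp add: mono_on_def) }
    moreover
    { assume "\<Omega> = {1<..}"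
      then have "\<forall>v\<in>\<Omega>. gen_inv F v = Inf {}" unfolding gen_inv_def
      proof -
        assume "\<Omega> = {1<..}"
        show "\<forall>v\<in>\<Omega>. Inf {x. v \<le> F x} = Inf {}" using le \<open>\<Omega> = {1<..}\<close>
          by (metis (mono_tags, lifting) Collect_empty_eq greaterThan_iff linorder_not_le order_less_le_trans)
      qed
      then have ?thesis by (simp add: mono_on_def) }
    moreover
    { assume "\<Omega> = {1}" then have ?thesis by (simp add: mono_on_def) }
    moreover
    { assume \<Omega>': "\<Omega> = {0<..<1}"
      have ?thesis unfolding mono_on_def gen_inv_def
      proof (intro allI impI, elim conjE)
        fix a b assume ab: "a \<in> \<Omega>" "b \<in> \<Omega>" "a \<le> b"
        have "eventually (\<lambda>x. F x > b) at_top" using F1 ab \<Omega>' by (simp add: order_tendstoD(1))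
        then obtain x1 where "F x1 > b" by (metis eventually_at_top_linorder order.refl)
        then have ne: "{x. b \<le> F x} \<noteq> {}" using less_imp_le by blast
        have "eventually (\<lambda>x. F x < a) at_bot" using F0 ab \<Omega>' by (simp add: order_tendstoD(2))
        then obtain x0 where x0: "\<forall>x\<le>x0. F x < a" by (metis eventually_at_bot_linorder)
        have bdd: "bdd_below {x. a \<le> F x}" unfolding bdd_below_def
          by (rule exI[of _ x0]) (metis linorder_not_le mem_Collect_eq order_less_imp_le x0)
        show "Inf {x. a \<le> F x} \<le> Inf {x. b \<le> F x}"
          by (rule cInf_superset_mono[OF ne bdd]) (use ab in auto)
      qed }
    ultimately show ?thesis using \<Omega> by blast
  qed
  then show "gen_inv F \<in> borel_measurable (restrict_space borel \<Omega>)"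
    by (rule borel_measurable_mono_on_fnc)
qed


lemma AE_geninv:
  assumes gm[measurable]: "g \<in> borel_measurable U01"
    and cont: "continuous_on UNIV (cdf (distr U01 borel g))"
  shows "AE u in U01. gen_inv (cdf (distr U01 borel g)) (cdf (distr U01 borel g) (g u)) = g u"
proof -
  define F where "F = cdf (distr U01 borel g)"
  interpret R: real_distribution "distr U01 borel g" using prob_space.real_distribution_distr[OF U01_prob gm] .
  interpret P: prob_space U01 by (rule U01_prob)
  have Fmono: "mono F" unfolding F_def by (intro monoI R.cdf_nondecreasing)
  have Fm[measurable]: "F \<in> borel_measurable borel"
    using cont unfolding F_def by (intro borel_measurable_continuous_onI)
  have b: "F x \<ge> 0" "F x \<le> 1" for x unfolding F_def using R.cdf_nonneg R.cdf_bounded_prob by auto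
  have q: "AE u in U01. \<not> (q < g u \<and> F (g u) \<le> F q)" for q
  proof -
    define A where "A = {u\<in>space U01. F (g u) \<le> F q}"
    define B where "B = {u\<in>space U01. g u \<le> q}"
    have AB[measurable]: "A \<in> sets U01" "B \<in> sets U01" unfolding A_def B_def by measurable
    have "B \<subseteq> A" unfolding A_def B_def by (auto intro: monoD[OF Fmono])
    have mA: "measure U01 A = F q" using pit_cdf[OF U01_prob gm cont, of "F q"] b[of q]
      unfolding A_def F_def by simp
    have mB: "measure U01 B = F q" unfolding B_def F_def cdf_distr_eq[OF gm] ..
    have "measure U01 (A - B) = 0" using P.finite_measure_Diff[OF AB(1,2) \<open>B \<subseteq> A\<close>] mA mB by simp
    then have "A - B \<in> null_sets U01" using AB by (simp add: P.emeasure_eq_measure null_sets_def)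
    then show ?thesis by (rule AE_I') (auto simp: A_def B_def)
  qed
  have "AE u in U01. \<forall>q\<in>\<rat>. \<not> (q < g u \<and> F (g u) \<le> F q)"
    by (rule AE_ball_countable') (use q countable_rat in auto)
  then show ?thesis unfolding F_def[symmetric]
  proof (rule AE_mp, intro AE_I2 impI)
    fix u assume H: "\<forall>q\<in>\<rat>. \<not> (q < g u \<and> F (g u) \<le> F q)"
    have "\<forall>z<g u. F z \<noteq> F (g u)"
    proof (intro allI impI)
      fix z assume z: "z < g u"
      obtain q where q: "q \<in> \<rat>" "z < q" "q < g u" using Rats_dense_in_real[OF z] by blast
      have "F z \<le> F q" "F q \<le> F (g u)" using q by (simp_all add: monoD[OF Fmono])
      then show "F z \<noteq> F (g u)" using H q by force
    qed
    then show "gen_inv F (F (g u)) = g u" by (rule gen_inv_eq[OF Fmono])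
  qed
qed

lemma pearson_cong:
  assumes [measurable]: "f1 \<in> borel_measurable M" "f1' \<in> borel_measurable M"
    "f2 \<in> borel_measurable M" "f2' \<in> borel_measurable M"
    and A1: "AE \<omega> in M. f1 \<omega> = f1' \<omega>" and A2: "AE \<omega> in M. f2 \<omega> = f2' \<omega>"
  shows "pearson M f1 f2 = pearson M f1' f2'"
proof -
  have e1: "(\<integral>\<omega>. f1 \<omega> \<partial>M) = (\<integral>\<omega>. f1' \<omega> \<partial>M)" by (rule integral_cong_AE) (use A1 in auto)
  have e2: "(\<integral>\<omega>. f2 \<omega> \<partial>M) = (\<integral>\<omega>. f2' \<omega> \<partial>M)" by (rule integral_cong_AE) (use A2 in auto)
  define c1 where "c1 = (\<integral>\<omega>. f1' \<omega> \<partial>M)"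
  define c2 where "c2 = (\<integral>\<omega>. f2' \<omega> \<partial>M)"
  have i1: "(\<integral>\<omega>. (f1 \<omega> - c1) * (f2 \<omega> - c2) \<partial>M) = (\<integral>\<omega>. (f1' \<omega> - c1) * (f2' \<omega> - c2) \<partial>M)"
  proof (rule integral_cong_AE)
    show "AE x in M. (f1 x - c1) * (f2 x - c2) = (f1' x - c1) * (f2' x - c2)" using A1 A2 by eventually_elim simp
  qed measurable
  have i2: "(\<integral>\<omega>. (f1 \<omega> - c1)^2 \<partial>M) = (\<integral>\<omega>. (f1' \<omega> - c1)^2 \<partial>M)"
  proof (rule integral_cong_AE)
    show "AE x in M. (f1 x - c1)^2 = (f1' x - c1)^2" using A1 by eventually_elim simp
  qed measurable
  have i3: "(\<integral>\<omega>. (f2 \<omega> - c2)^2 \<partial>M) = (\<integral>\<omega>. (f2' \<omega> - c2)^2 \<partial>M)"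
  proof (rule integral_cong_AE)
    show "AE x in M. (f2 x - c2)^2 = (f2' x - c2)^2" using A2 by eventually_elim simp
  qed measurable
  show ?thesis unfolding pearson_def e1 e2 c1_def[symmetric] c2_def[symmetric] i1 i2 i3 by (rule refl)
qed

lemma AE_transfer:
  assumes U: "U \<in> measurable M N" and D: "distr M N U = N" and AE: "AE u in N. P u"
  shows "AE \<omega> in M. P (U \<omega>)"
proof -
  from AE obtain Z where Z: "{x \<in> space N. \<not> P x} \<subseteq> Z" "emeasure N Z = 0" "Z \<in> sets N" by (rule AE_E)
  have "emeasure M (U -` Z \<inter> space M) = emeasure (distr M N U) Z" using U Z by (simp add: emeasure_distr)
  also have "\<dots> = 0" using D Z by simp
  finally have "U -` Z \<inter> space M \<in> null_sets M" using U Z by (auto simp: null_sets_def)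
  then show ?thesis by (rule AE_I') (use Z measurable_space[OF U] in auto)
qed

lemma side:
  assumes gm[measurable]: "g \<in> borel_measurable U01" and pw: "pw_cont_strict_mono g"
    and P: "prob_space M" and X[measurable]: "X \<in> borel_measurable M"
    and contX: "continuous_on UNIV (cdf (distr M borel X))"
  shows "(\<lambda>\<omega>. g (cdf (distr M borel X) (X \<omega>))) \<in> borel_measurable M"
    and "(\<lambda>\<omega>. gen_inv (cdf (distr U01 borel g)) ((cdf (distr U01 borel g) \<circ> g) (cdf (distr M borel X) (X \<omega>)))) \<in> borel_measurable M"
    and "AE \<omega> in M. g (cdf (distr M borel X) (X \<omega>)) = gen_inv (cdf (distr U01 borel g)) ((cdf (distr U01 borel g) \<circ> g) (cdf (distr M borel X) (X \<omega>)))"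
proof -
  define F where "F = cdf (distr U01 borel g)"
  define FX where "FX = cdf (distr M borel X)"
  interpret R: real_distribution "distr U01 borel g" using prob_space.real_distribution_distr[OF U01_prob gm] .
  interpret RX: real_distribution "distr M borel X" using prob_space.real_distribution_distr[OF P X] .
  have cF: "continuous_on UNIV F" unfolding F_def by (rule Fg_cont[OF pw gm])
  have Fm[measurable]: "F \<in> borel_measurable borel" using cF by (intro borel_measurable_continuous_onI)
  have FXm[measurable]: "FX \<in> borel_measurable borel" using contX unfolding FX_def by (intro borel_measurable_continuous_onI)
  have Gm[measurable]: "gen_inv F \<in> borel_measurable borel" unfolding F_def
    by (rule gen_inv_meas) (use R.cdf_nonneg R.cdf_bounded_prob R.cdf_lim_at_bot R.cdf_lim_at_top_prob in auto)
  have Um[measurable]: "(\<lambda>\<omega>. FX (X \<omega>)) \<in> measurable M U01"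
    unfolding U01_def
  proof (rule measurable_restrict_space2)
    show "(\<lambda>\<omega>. FX (X \<omega>)) \<in> space M \<rightarrow> {0..1}" using RX.cdf_nonneg RX.cdf_bounded_prob by (auto simp: FX_def)
    show "(\<lambda>\<omega>. FX (X \<omega>)) \<in> measurable M lborel" unfolding measurable_lborel2 by measurable
  qed
  have D: "distr M U01 (\<lambda>\<omega>. FX (X \<omega>)) = U01" unfolding FX_def by (rule pit_distr(2)[OF P X contX])
  show "(\<lambda>\<omega>. g (cdf (distr M borel X) (X \<omega>))) \<in> borel_measurable M"
    unfolding FX_def[symmetric] by measurable
  show "(\<lambda>\<omega>. gen_inv (cdf (distr U01 borel g)) ((cdf (distr U01 borel g) \<circ> g) (cdf (distr M borel X) (X \<omega>)))) \<in> borel_measurable M"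
    unfolding FX_def[symmetric] F_def[symmetric] o_def by measurable
  have "AE u in U01. gen_inv F (F (g u)) = g u" unfolding F_def by (rule AE_geninv[OF gm]) (use cF F_def in simp)
  then have "AE \<omega> in M. gen_inv F (F (g (FX (X \<omega>)))) = g (FX (X \<omega>))" by (rule AE_transfer[OF Um D])
  then show "AE \<omega> in M. g (cdf (distr M borel X) (X \<omega>)) = gen_inv (cdf (distr U01 borel g)) ((cdf (distr U01 borel g) \<circ> g) (cdf (distr M borel X) (X \<omega>)))"
    unfolding FX_def[symmetric] F_def[symmetric] o_def by (rule AE_mp) (intro AE_I2, simp)
qed

theorem proposition5:
  fixes g h :: "real \<Rightarrow> real"
  assumes "square_integrable01 g" and "square_integrable01 h"
    and "pw_cont_strict_mono g" and "pw_cont_strict_mono h"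
  defines "Fg \<equiv> cdf (distr U01 borel g)" and "Fh \<equiv> cdf (distr U01 borel h)"
  defines "Tg \<equiv> Fg \<circ> g" and "Th \<equiv> Fh \<circ> h"
  shows "(continuous_on UNIV Fg \<and> continuous_on UNIV Fh \<and> unif_preserving Tg \<and> unif_preserving Th)
       \<and> (continuous_on {0..1} g \<and> continuous_on {0..1} h \<longrightarrow>
            strict_mono_on (g ` {0..1}) Fg \<and> strict_mono_on (h ` {0..1}) Fh)
       \<and> (\<forall>(M::'a measure) X Y. prob_space M \<and> X \<in> borel_measurable M \<and> Y \<in> borel_measurable M
            \<and> continuous_on UNIV (cdf (distr M borel X)) \<and> continuous_on UNIV (cdf (distr M borel Y)) \<longrightarrow>
            (let U = (\<lambda>\<omega>. cdf (distr M borel X) (X \<omega>)); V = (\<lambda>\<omega>. cdf (distr M borel Y) (Y \<omega>)) in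
              rho_gh M g h X Y = pearson M (\<lambda>\<omega>. g (U \<omega>)) (\<lambda>\<omega>. h (V \<omega>))
              \<and> pearson M (\<lambda>\<omega>. g (U \<omega>)) (\<lambda>\<omega>. h (V \<omega>))
                = pearson M (\<lambda>\<omega>. gen_inv Fg (Tg (U \<omega>))) (\<lambda>\<omega>. gen_inv Fh (Th (V \<omega>)))))"
proof -
  have gm[measurable]: "g \<in> borel_measurable U01" and hm[measurable]: "h \<in> borel_measurable U01"
    using assms(1,2) unfolding square_integrable01_def by auto
  have cg: "continuous_on UNIV Fg" unfolding Fg_def by (rule Fg_cont[OF assms(3) gm])
  have ch: "continuous_on UNIV Fh" unfolding Fh_def by (rule Fg_cont[OF assms(4) hm])
  have up: "unif_preserving (cdf (distr U01 borel f) \<circ> f)"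
    if fm[measurable]: "f \<in> borel_measurable U01" and cf: "continuous_on UNIV (cdf (distr U01 borel f))" for f
  proof -
    have [measurable]: "cdf (distr U01 borel f) \<in> borel_measurable borel"
      using cf by (intro borel_measurable_continuous_onI)
    have "(cdf (distr U01 borel f) \<circ> f) \<in> borel_measurable U01" unfolding o_def by measurable
    moreover have "distr U01 borel (cdf (distr U01 borel f) \<circ> f) = distr U01 borel (\<lambda>u. u)"
      unfolding o_def by (rule pit_distr(1)[OF U01_prob fm cf])
    ultimately show ?thesis unfolding unif_preserving_def by simp
  qed
  have part1: "continuous_on UNIV Fg \<and> continuous_on UNIV Fh \<and> unif_preserving Tg \<and> unif_preserving Th"
    using cg ch up[OF gm] up[OF hm] unfolding Tg_def Th_def Fg_def Fh_def by simp
  have part2: "continuous_on {0..1} g \<and> continuous_on {0..1} h \<longrightarrow>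
            strict_mono_on (g ` {0..1}) Fg \<and> strict_mono_on (h ` {0..1}) Fh"
    unfolding Fg_def Fh_def using Fg_strict[OF gm] Fg_strict[OF hm] by blast
  have part3: "\<forall>(M::'a measure) X Y. prob_space M \<and> X \<in> borel_measurable M \<and> Y \<in> borel_measurable M
            \<and> continuous_on UNIV (cdf (distr M borel X)) \<and> continuous_on UNIV (cdf (distr M borel Y)) \<longrightarrow>
            (let U = (\<lambda>\<omega>. cdf (distr M borel X) (X \<omega>)); V = (\<lambda>\<omega>. cdf (distr M borel Y) (Y \<omega>)) in
              rho_gh M g h X Y = pearson M (\<lambda>\<omega>. g (U \<omega>)) (\<lambda>\<omega>. h (V \<omega>))
              \<and> pearson M (\<lambda>\<omega>. g (U \<omega>)) (\<lambda>\<omega>. h (V \<omega>))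
                = pearson M (\<lambda>\<omega>. gen_inv Fg (Tg (U \<omega>))) (\<lambda>\<omega>. gen_inv Fh (Th (V \<omega>))))"
  proof (intro allI impI, elim conjE)
    fix M :: "'a measure" and X Y
    assume P: "prob_space M" and X: "X \<in> borel_measurable M" and Y: "Y \<in> borel_measurable M"
      and cX: "continuous_on UNIV (cdf (distr M borel X))" and cY: "continuous_on UNIV (cdf (distr M borel Y))"
    note sg = side[OF gm assms(3) P X cX]
    note sh = side[OF hm assms(4) P Y cY]
    show "let U = (\<lambda>\<omega>. cdf (distr M borel X) (X \<omega>)); V = (\<lambda>\<omega>. cdf (distr M borel Y) (Y \<omega>)) in
              rho_gh M g h X Y = pearson M (\<lambda>\<omega>. g (U \<omega>)) (\<lambda>\<omega>. h (V \<omega>))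
              \<and> pearson M (\<lambda>\<omega>. g (U \<omega>)) (\<lambda>\<omega>. h (V \<omega>))
                = pearson M (\<lambda>\<omega>. gen_inv Fg (Tg (U \<omega>))) (\<lambda>\<omega>. gen_inv Fh (Th (V \<omega>)))"
      unfolding Let_def Tg_def Th_def Fg_def Fh_def
      using pearson_cong[OF sg(1) sg(2) sh(1) sh(2) sg(3) sh(3)] by (simp add: rho_gh_def)
  qed
  show ?thesis using part1 part2 part3 by blast
qed

end
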